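(* Let $q$ be a prime power. For each integer $k\ge 3$ there exists an $[n,k]_q$ MWS code with $n<q^{\frac{k^2+k-4}{2}}$.
   Context: An $[n,k]_q$ code is a $k$-dimensional subspace of $\mathbb{F}_q^n$, non-degenerate (no coordinate identically zero on the code). It is MWS if the set of its non-zero Hamming weights has cardinality $\frac{q^k-1}{q-1}$. *)

theory Defs
  imports Complex_Main "HOL-Library.Function_Algebras" "HOL-Library.Cardinality"
begin

text \<open>Vectors of F_q^n are modelled as functions nat => 'a vanishing outside {0..<n};
  the field F_q is a finite field type 'a with q = CARD('a).\<close>

definition scalev :: "'a::field \<Rightarrow> (nat \<Rightarrow> 'a) \<Rightarrow> (nat \<Rightarrow> 'a)" where
  "scalev c v = (\<lambda>i. c * v i)"

lemma vector_space_scalev: "vector_space (scalev :: 'a::field \<Rightarrow> _)"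
  unfolding vector_space_def scalev_def by (auto simp: fun_eq_iff algebra_simps)

definition ambient :: "nat \<Rightarrow> (nat \<Rightarrow> 'a::zero) set" where
  "ambient n = {v. \<forall>i. n \<le> i \<longrightarrow> v i = 0}"

definition hweight :: "nat \<Rightarrow> (nat \<Rightarrow> 'a::zero) \<Rightarrow> nat" where
  "hweight n v = card {i. i < n \<and> v i \<noteq> 0}"

definition is_code :: "nat \<Rightarrow> nat \<Rightarrow> (nat \<Rightarrow> 'a::field) set \<Rightarrow> bool" where
  "is_code n k C \<longleftrightarrow> C \<subseteq> ambient n \<and> module.subspace scalev C
     \<and> vector_space.dim scalev C = k \<and> (\<forall>i<n. \<exists>c\<in>C. c i \<noteq> 0)"

definition weights :: "nat \<Rightarrow> (nat \<Rightarrow> 'a::zero) set \<Rightarrow> nat set" where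
  "weights n C = {hweight n c | c. c \<in> C \<and> c \<noteq> 0}"

definition is_MWS :: "nat \<Rightarrow> nat \<Rightarrow> (nat \<Rightarrow> 'a::{finite,field}) set \<Rightarrow> bool" where
  "is_MWS n k C \<longleftrightarrow> card (weights n C) = (CARD('a) ^ k - 1) div (CARD('a) - 1)"

end

theory Submission
  imports Defs "HOL-Library.Multiset"
begin


interpretation V: vector_space "scalev :: 'a::field \<Rightarrow> (nat \<Rightarrow> 'a) \<Rightarrow> _"
  by (rule vector_space_scalev)

definition dotp :: "nat \<Rightarrow> (nat \<Rightarrow> 'a::field) \<Rightarrow> (nat \<Rightarrow> 'a) \<Rightarrow> 'a" where
  "dotp k u v = (\<Sum>l<k. u l * v l)"

definition wt :: "nat \<Rightarrow> (nat \<Rightarrow> 'a::field) multiset \<Rightarrow> (nat \<Rightarrow> 'a) \<Rightarrow> nat" where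
  "wt k M u = size (filter_mset (\<lambda>v. dotp k u v \<noteq> 0) M)"

definition colsl :: "'b multiset \<Rightarrow> 'b list" where
  "colsl M = (SOME xs. mset xs = M)"

lemma mset_colsl[simp]: "mset (colsl M) = M"
  unfolding colsl_def by (metis (mono_tags) ex_mset someI_ex)

lemma length_colsl[simp]: "length (colsl M) = size M"
  by (metis mset_colsl size_mset)

definition enc :: "nat \<Rightarrow> (nat \<Rightarrow> 'a::field) multiset \<Rightarrow> (nat \<Rightarrow> 'a) \<Rightarrow> (nat \<Rightarrow> 'a)" where
  "enc k M u = (\<lambda>i. if i < size M then dotp k u (colsl M ! i) else 0)"

definition good :: "nat \<Rightarrow> (nat \<Rightarrow> 'a::field) multiset \<Rightarrow> bool" where
  "good k M \<longleftrightarrow> (\<forall>v\<in>#M. v \<in> ambient k \<and> v \<noteq> 0) \<and> (\<forall>u\<in>ambient k - {0}. wt k M u > 0)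
     \<and> (\<forall>u\<in>ambient k - {0}. \<forall>v\<in>ambient k - {0}. wt k M u = wt k M v \<longrightarrow> (\<exists>c. v = scalev c u))"

lemma hweight_enc: "hweight (size M) (enc k M u) = wt k M u"
proof -
  have "hweight (size M) (enc k M u) = card {i. i < length (colsl M) \<and> dotp k u (colsl M ! i) \<noteq> 0}"
    unfolding hweight_def enc_def by (rule arg_cong[where f=card]) auto
  also have "\<dots> = length (filter (\<lambda>v. dotp k u v \<noteq> 0) (colsl M))"
    by (simp add: length_filter_conv_card)
  also have "\<dots> = wt k M u"
    unfolding wt_def by (metis mset_colsl mset_filter size_mset)
  finally show ?thesis .
qed

lemma dotp_add: "dotp k (u + w) v = dotp k u v + dotp k w v"
  unfolding dotp_def by (simp add: distrib_right sum.distrib)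

lemma dotp_scale: "dotp k (scalev c u) v = c * dotp k u v"
  unfolding dotp_def scalev_def by (simp add: sum_distrib_left mult.assoc)

lemma dotp_zero[simp]: "dotp k 0 v = 0"
  unfolding dotp_def by simp

lemma enc_add: "enc k M (u + w) = enc k M u + enc k M w"
  unfolding enc_def by (auto simp: fun_eq_iff dotp_add)

lemma enc_scale: "enc k M (scalev c u) = scalev c (enc k M u)"
  unfolding enc_def using dotp_scale[of k c u] by (auto simp: fun_eq_iff scalev_def)

lemma enc_zero[simp]: "enc k M 0 = 0"
  unfolding enc_def by (auto simp: fun_eq_iff)

lemma wt_scale: "c \<noteq> 0 \<Longrightarrow> wt k M (scalev c u) = wt k M u"
  unfolding wt_def by (simp add: dotp_scale)

lemma ambient_add: "(u::nat\<Rightarrow>'a::monoid_add) \<in> ambient k \<Longrightarrow> w \<in> ambient k \<Longrightarrow> u + w \<in> ambient k"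
  unfolding ambient_def by auto
lemma ambient_scale: "u \<in> ambient k \<Longrightarrow> scalev c u \<in> ambient k"
  unfolding ambient_def scalev_def by auto
lemma ambient_zero[simp]: "0 \<in> ambient k"
  unfolding ambient_def by auto

lemma enc_ambient: "enc k M u \<in> ambient (size M)"
  unfolding enc_def ambient_def by auto

lemma ambient_Suc: "ambient (Suc k) = (\<lambda>(u,a). u(k := a)) ` (ambient k \<times> (UNIV::'a::zero set))"
proof (rule set_eqI, rule iffI)
  fix x :: "nat \<Rightarrow> 'a" assume "x \<in> ambient (Suc k)"
  then have "x = (\<lambda>(u,a). u(k := a)) (x(k:=0), x k)" "(x(k:=0), x k) \<in> ambient k \<times> UNIV"
    unfolding ambient_def by auto
  then show "x \<in> (\<lambda>(u,a). u(k := a)) ` (ambient k \<times> UNIV)" by blast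
qed (auto simp: ambient_def)

lemma inj_ambient_Suc: "inj_on (\<lambda>(u,a). u(k := a)) (ambient k \<times> (UNIV::'a::zero set))"
  unfolding inj_on_def ambient_def by (auto simp: fun_eq_iff)

lemma card_ambient: "card (ambient k :: (nat \<Rightarrow> 'a::{finite,zero}) set) = CARD('a) ^ k"
  and finite_ambient: "finite (ambient k :: (nat \<Rightarrow> 'a::{finite,zero}) set)"
proof (induction k)
  case 0
  have "ambient 0 = {0 :: nat \<Rightarrow> 'a}" unfolding ambient_def by auto
  then show "card (ambient 0 :: (nat \<Rightarrow> 'a::{finite,zero}) set) = CARD('a) ^ 0" by simp
  case 0
  show "finite (ambient 0 :: (nat \<Rightarrow> 'a::{finite,zero}) set)" using \<open>ambient 0 = _\<close> by simp
next
  case (Suc k)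
  show "card (ambient (Suc k) :: (nat \<Rightarrow> 'a::{finite,zero}) set) = CARD('a) ^ Suc k"
    unfolding ambient_Suc card_image[OF inj_ambient_Suc] using Suc
    by (simp add: card_cartesian_product)
  show "finite (ambient (Suc k) :: (nat \<Rightarrow> 'a::{finite,zero}) set)"
    unfolding ambient_Suc using Suc by simp
qed

lemma card_P: "card (ambient k - {0} :: (nat \<Rightarrow> 'a::{finite,zero}) set) = CARD('a) ^ k - 1"
  by (simp add: card_ambient finite_ambient)

lemma scalev_inj: "u \<noteq> (0::nat \<Rightarrow> 'a::field) \<Longrightarrow> scalev c u = scalev d u \<Longrightarrow> c = d"
  unfolding scalev_def by (auto simp: fun_eq_iff)

lemma scalev_nz: "u \<noteq> (0::nat \<Rightarrow> 'a::field) \<Longrightarrow> c \<noteq> 0 \<Longrightarrow> scalev c u \<noteq> 0"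
  unfolding scalev_def by (auto simp: fun_eq_iff)

lemma scalev_scalev: "scalev c (scalev d u) = scalev (c * d) (u::nat \<Rightarrow> 'a::field)"
  unfolding scalev_def by (auto simp: fun_eq_iff mult.assoc)

lemma scalev_one[simp]: "scalev 1 u = (u::nat \<Rightarrow> 'a::field)"
  unfolding scalev_def by auto

lemma CARD_field_ge2: "CARD('a::{finite,field}) \<ge> 2"
proof -
  have "card {0::'a, 1} \<le> CARD('a)" by (rule card_mono) auto
  then show ?thesis by simp
qed

lemma count_classes:
  fixes f :: "(nat \<Rightarrow> 'a::{finite,field}) \<Rightarrow> nat"
  assumes scl: "\<And>u c. u \<in> ambient k - {0} \<Longrightarrow> c \<noteq> 0 \<Longrightarrow> f (scalev c u) = f u"
    and inj: "\<And>u v. u \<in> ambient k - {0} \<Longrightarrow> v \<in> ambient k - {0} \<Longrightarrow> f u = f v \<Longrightarrow> \<exists>c. v = scalev c u"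
  shows "card (f ` (ambient k - {0})) = (CARD('a) ^ k - 1) div (CARD('a) - 1)"
proof -
  let ?P = "ambient k - {0} :: (nat \<Rightarrow> 'a) set"
  have fin: "finite ?P" by (simp add: finite_ambient)
  have fib: "card {u \<in> ?P. f u = y} = CARD('a) - 1" if "y \<in> f ` ?P" for y
  proof -
    obtain u0 where u0: "u0 \<in> ?P" "y = f u0" using \<open>y \<in> f ` ?P\<close> by blast
    have "{u \<in> ?P. f u = y} = (\<lambda>c. scalev c u0) ` (UNIV - {0})"
    proof (rule set_eqI, rule iffI)
      fix u assume "u \<in> {u \<in> ?P. f u = y}"
      then obtain c where c: "u = scalev c u0" using inj[of u0 u] u0 by auto
      then have "c \<noteq> 0" using \<open>u \<in> {u \<in> ?P. f u = y}\<close> unfolding scalev_def by (auto simp: fun_eq_iff)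
      then show "u \<in> (\<lambda>c. scalev c u0) ` (UNIV - {0})" using c by auto
    next
      fix u assume "u \<in> (\<lambda>c. scalev c u0) ` (UNIV - {0})"
      then obtain c where "c \<noteq> 0" "u = scalev c u0" by auto
      then show "u \<in> {u \<in> ?P. f u = y}" using u0 scl[of u0 c] scalev_nz[of u0 c] ambient_scale[of u0 k c]
        by auto
    qed
    moreover have "inj_on (\<lambda>c. scalev c u0) (UNIV - {0})"
      using scalev_inj[of u0] u0 by (auto simp: inj_on_def)
    ultimately show ?thesis by (simp add: card_image card_Diff_singleton)
  qed
  have eq: "?P = (\<Union>y\<in>f ` ?P. {u \<in> ?P. f u = y})" by auto
  have "card ?P = card (\<Union>y\<in>f ` ?P. {u \<in> ?P. f u = y})" using eq by simp
  also have "\<dots> = (\<Sum>y\<in>f ` ?P. card {u \<in> ?P. f u = y})"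
    using fin by (intro card_UN_disjoint) auto
  also have "\<dots> = (\<Sum>y\<in>f ` ?P. CARD('a) - 1)" using fib by simp
  finally have "CARD('a) ^ k - 1 = card (f ` ?P) * (CARD('a) - 1)" by (simp add: card_P)
  moreover have "CARD('a) - 1 > 0"
    using CARD_field_ge2[where 'a='a] by linarith
  ultimately show ?thesis by simp
qed

lemma sum_fun_apply: "(\<Sum>x\<in>A. f x) i = (\<Sum>x\<in>A. f x i)"
  for f :: "'b \<Rightarrow> nat \<Rightarrow> 'a::comm_monoid_add"
  by (induction A rule: infinite_finite_induct) auto

lemma enc_sum: "enc k M (\<Sum>x\<in>A. f x) = (\<Sum>x\<in>A. enc k M (f x))"
proof (induction A rule: infinite_finite_induct)
  case (infinite A) then show ?case by (simp only: sum.infinite[OF infinite] enc_zero)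
next
  case empty then show ?case by (simp only: sum.empty enc_zero)
next
  case (insert x F) then show ?case by (simp only: sum.insert[OF insert(1,2)] enc_add insert(3))
qed

definition dlt :: "nat \<Rightarrow> nat \<Rightarrow> 'a::field" where "dlt l = (\<lambda>i. if i = l then 1 else 0)"

lemma dlt_ambient: "l < k \<Longrightarrow> dlt l \<in> ambient k"
  unfolding dlt_def ambient_def by auto

lemma expand_ambient: "u \<in> ambient k \<Longrightarrow> u = (\<Sum>l<k. scalev (u l) (dlt l))"
proof (rule ext)
  fix i assume u: "u \<in> ambient k"
  have "(\<Sum>l<k. scalev (u l) (dlt l)) i = (\<Sum>l<k. if l = i then u i else 0)"
    unfolding sum_fun_apply by (intro sum.cong) (auto simp: scalev_def dlt_def)
  also have "\<dots> = u i" using u unfolding ambient_def by (cases "i < k") auto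
  finally show "u i = (\<Sum>l<k. scalev (u l) (dlt l)) i" by simp
qed

lemma dotp_dlt: "l < k \<Longrightarrow> dotp k (dlt l) v = v l"
proof -
  assume l: "l < k"
  have "dotp k (dlt l) v = (\<Sum>la<k. if la = l then v la else 0)"
    unfolding dotp_def dlt_def by (intro sum.cong) auto
  then show ?thesis using l by simp
qed

lemma enc_nz:
  assumes "good k M" "u \<in> ambient k" "u \<noteq> 0" shows "enc k M u \<noteq> 0"
proof
  assume "enc k M u = 0"
  then have "hweight (size M) (enc k M u) = 0" unfolding hweight_def by simp
  moreover have "wt k M u > 0" using assms unfolding good_def by blast
  ultimately show False using hweight_enc[of M k u] by simp
qed

lemma good_code:
  fixes M :: "(nat \<Rightarrow> 'a::{finite,field}) multiset"
  assumes g: "good k M"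
  shows "is_code (size M) k (enc k M ` ambient k) \<and> is_MWS (size M) k (enc k M ` ambient k)"
proof -
  let ?C = "enc k M ` ambient k"
  have sub: "?C \<subseteq> ambient (size M)" using enc_ambient by blast
  have subsp: "V.subspace ?C"
  proof (rule V.subspaceI)
    show "0 \<in> ?C" using enc_zero[of k M, symmetric] ambient_zero by blast
    show "x + y \<in> ?C" if "x \<in> ?C" "y \<in> ?C" for x y
      using that by (auto simp: enc_add[symmetric] intro!: imageI ambient_add)
    show "scalev c x \<in> ?C" if "x \<in> ?C" for c x
      using that by (auto simp: enc_scale[symmetric] intro!: imageI ambient_scale)
  qed
  let ?B = "(\<lambda>l. enc k M (dlt l)) ` {..<k}"
  have injB: "inj_on (\<lambda>l. enc k M (dlt l)) {..<k}"
  proof (rule inj_onI)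
    fix l m assume lm: "l \<in> {..<k}" "m \<in> {..<k}" "enc k M (dlt l) = enc k M (dlt m)"
    show "l = m"
    proof (rule ccontr)
      assume "l \<noteq> m"
      have "enc k M (dlt l + scalev (-1) (dlt m)) = 0"
        by (simp only: enc_add enc_scale lm(3)) (simp add: scalev_def fun_eq_iff)
      moreover have "dlt l + scalev (-1) (dlt m) \<in> ambient k"
        using lm unfolding ambient_def dlt_def scalev_def by auto
      moreover have "dlt l + scalev (-1) (dlt m) \<noteq> (0 :: nat \<Rightarrow> 'a)"
        using \<open>l \<noteq> m\<close> by (auto simp: fun_eq_iff dlt_def scalev_def)
      ultimately show False using enc_nz[OF g] by blast
    qed
  qed
  have cardB: "card ?B = k" using card_image[OF injB] by simp
  have BC: "?B \<subseteq> ?C" using dlt_ambient by blast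
  have CB: "?C \<subseteq> V.span ?B"
  proof
    fix x assume "x \<in> ?C"
    then obtain u where u: "u \<in> ambient k" "x = enc k M u" by blast
    then have "x = (\<Sum>l<k. scalev (u l) (enc k M (dlt l)))"
    proof -
      have "x = enc k M (\<Sum>l<k. scalev (u l) (dlt l))"
        by (simp only: u(2) expand_ambient[OF u(1), symmetric])
      also have "\<dots> = (\<Sum>l<k. scalev (u l) (enc k M (dlt l)))" by (simp only: enc_sum enc_scale)
      finally show ?thesis .
    qed
    also have "\<dots> \<in> V.span ?B"
      by (intro V.span_sum V.span_scale V.span_base) auto
    finally show "x \<in> V.span ?B" .
  qed
  have indep: "V.independent ?B"
  proof
    assume "V.dependent ?B"
    then obtain c where c: "\<exists>v\<in>?B. c v \<noteq> 0" "(\<Sum>v\<in>?B. scalev (c v) v) = 0"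
      using V.dependent_finite[of ?B] by blast
    let ?w = "(\<Sum>l<k. scalev (c (enc k M (dlt l))) (dlt l)) :: nat \<Rightarrow> 'a"
    have "enc k M ?w = (\<Sum>l<k. scalev (c (enc k M (dlt l))) (enc k M (dlt l)))"
      by (simp add: enc_sum enc_scale)
    also have "\<dots> = (\<Sum>v\<in>?B. scalev (c v) v)"
      by (subst sum.reindex[OF injB]) auto
    finally have e0: "enc k M ?w = 0" using c(2) by simp
    have wa: "?w \<in> ambient k"
      unfolding ambient_def by (auto simp: sum_fun_apply scalev_def dlt_def)
    have "?w = 0" using enc_nz[OF g wa] e0 by blast
    moreover obtain l where l: "l < k" "c (enc k M (dlt l)) \<noteq> 0" using c(1) by auto
    moreover have "?w l = c (enc k M (dlt l))"
    proof -
      have "?w l = (\<Sum>la<k. scalev (c (enc k M (dlt la))) (dlt la) l)" by (simp add: sum_fun_apply)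
      also have "\<dots> = (\<Sum>la<k. if la = l then c (enc k M (dlt l)) else 0)"
        by (intro sum.cong) (auto simp: scalev_def dlt_def)
      also have "\<dots> = c (enc k M (dlt l))" using l(1) by simp
      finally show ?thesis .
    qed
    ultimately show False by simp
  qed
  have dim: "V.dim ?C = k" using V.basis_card_eq_dim[OF BC CB indep] cardB by simp
  have nondeg: "\<forall>i<size M. \<exists>c\<in>?C. c i \<noteq> 0"
  proof (intro allI impI)
    fix i assume i: "i < size M"
    let ?v = "colsl M ! i"
    have "?v \<in># M" using i by (metis length_colsl mset_colsl nth_mem set_mset_mset)
    then have v: "?v \<in> ambient k" "?v \<noteq> 0" using g unfolding good_def by auto
    then obtain l where l: "?v l \<noteq> 0" by (auto simp: fun_eq_iff)
    then have "l < k" using v(1) unfolding ambient_def using not_le by blast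
    then have "enc k M (dlt l) i \<noteq> 0" using i l by (simp add: enc_def dotp_dlt)
    then show "\<exists>c\<in>?C. c i \<noteq> 0" using dlt_ambient[OF \<open>l < k\<close>] by blast
  qed
  have W: "weights (size M) ?C = wt k M ` (ambient k - {0})"
  proof (rule set_eqI, rule iffI)
    fix y assume "y \<in> weights (size M) ?C"
    then obtain u where "u \<in> ambient k" "enc k M u \<noteq> 0" "y = hweight (size M) (enc k M u)"
      unfolding weights_def by auto
    then show "y \<in> wt k M ` (ambient k - {0})" using hweight_enc by (metis DiffI empty_iff enc_zero image_eqI insert_iff)
  next
    fix y assume "y \<in> wt k M ` (ambient k - {0})"
    then obtain u where "u \<in> ambient k" "u \<noteq> 0" "y = wt k M u" by auto
    then show "y \<in> weights (size M) ?C" unfolding weights_def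
      using enc_nz[OF g] hweight_enc[of M k u, symmetric] by blast
  qed
  have mws: "is_MWS (size M) k ?C"
    unfolding is_MWS_def W
  proof (rule count_classes)
    show "wt k M (scalev c u) = wt k M u" if "c \<noteq> 0" for u c using wt_scale[OF that] .
    show "\<exists>c. v = scalev c u" if "u \<in> ambient k - {0}" "v \<in> ambient k - {0}" "wt k M u = wt k M v" for u v
      using g that unfolding good_def by blast
  qed
  show ?thesis using sub subsp dim nondeg mws unfolding is_code_def by auto
qed



lemma wt_plus: "wt k (A + B) u = wt k A u + wt k B u"
  unfolding wt_def by simp

lemma wt_repeat: "wt k (repeat_mset n A) u = n * wt k A u"
  unfolding wt_def by (induction n) auto

lemma wt_rep: "wt k (replicate_mset m v) u = (if dotp k u v \<noteq> 0 then m else 0)"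
  unfolding wt_def by (induction m) auto

lemma wt_sum: "wt k (\<Sum>a\<in>S. f a) u = (\<Sum>a\<in>S. wt k (f a) u)"
  by (induction S rule: infinite_finite_induct) (auto simp: wt_plus wt_def)

lemma wt_empty[simp]: "wt k {#} u = 0"
  unfolding wt_def by simp

lemma size_sum_mset: "size (\<Sum>a\<in>S. f a) = (\<Sum>a\<in>S. size (f a))"
  for f :: "'b \<Rightarrow> 'c multiset"
  by (induction S rule: infinite_finite_induct) auto

lemma dotp_vadd: "dotp k u (v + w) = dotp k u v + dotp k u w"
  unfolding dotp_def by (simp add: distrib_left sum.distrib)

lemma dotp_vscale: "dotp k u (scalev c v) = c * dotp k u v"
  unfolding dotp_def scalev_def by (simp add: sum_distrib_left algebra_simps)

lemma dotp_dlt2: "l < k \<Longrightarrow> dotp k u (dlt l) = u l"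
proof -
  assume l: "l < k"
  have "dotp k u (dlt l) = (\<Sum>la<k. if la = l then u la else 0)"
    unfolding dotp_def dlt_def by (intro sum.cong) auto
  then show ?thesis using l by simp
qed

lemma dotp_Suc_amb: "g \<in> ambient k \<Longrightarrow> dotp (Suc k) u g = dotp k u g"
  unfolding dotp_def ambient_def by simp

lemma dotp_cong: "(\<And>i. i < k \<Longrightarrow> u i = u' i) \<Longrightarrow> dotp k u g = dotp k u' g"
  unfolding dotp_def by simp

lemma digits_lt:
  assumes "\<And>j. j < k \<Longrightarrow> d j < (q::nat)"
  shows "(\<Sum>j<k. q ^ j * d j) < q ^ k"
  using assms
proof (induction k)
  case 0 then show ?case by simp
next
  case (Suc k)
  have "(\<Sum>j<Suc k. q ^ j * d j) = (\<Sum>j<k. q ^ j * d j) + q ^ k * d k" by simp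
  also have "\<dots> < q ^ k + q ^ k * d k" using Suc by simp
  also have "\<dots> = q ^ k * (d k + 1)" by (simp add: algebra_simps)
  also have "\<dots> \<le> q ^ k * q" using Suc.prems[of k] by (intro mult_le_mono2) simp
  finally show ?case by (simp add: mult.commute)
qed

lemma digits_unique:
  assumes "\<And>j. j < k \<Longrightarrow> d j < (q::nat)" "\<And>j. j < k \<Longrightarrow> e j < q"
    and "(\<Sum>j<k. q ^ j * d j) = (\<Sum>j<k. q ^ j * e j)"
  shows "\<forall>j<k. d j = e j"
  using assms
proof (induction k)
  case 0 then show ?case by simp
next
  case (Suc k)
  let ?D = "\<Sum>j<k. q ^ j * d j" and ?E = "\<Sum>j<k. q ^ j * e j"
  have D: "?D < q ^ k" and E: "?E < q ^ k" using Suc.prems(1,2) by (intro digits_lt; simp)+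
  have eq: "?D + q ^ k * d k = ?E + q ^ k * e k" using Suc.prems(3) by simp
  have qk: "q ^ k > 0" using Suc.prems(1)[of k] by simp
  have "(?D + q ^ k * d k) div q ^ k = d k" using D qk by (simp add: div_add1_eq)
  moreover have "(?E + q ^ k * e k) div q ^ k = e k" using E qk by (simp add: div_add1_eq)
  ultimately have dk: "d k = e k" using eq by simp
  then have "?D = ?E" using eq by simp
  then have "\<forall>j<k. d j = e j" using Suc.IH Suc.prems(1,2) by (meson less_SucI)
  then show ?case using dk by (simp add: less_Suc_eq)
qed

lemma ex_io: "\<exists>io :: 'a::{finite,field} \<Rightarrow> nat. bij_betw io UNIV {0..<CARD('a)} \<and> io 0 = 0"
proof -
  obtain h :: "'a \<Rightarrow> nat" where h: "bij_betw h (UNIV - {0}) {0..<card (UNIV - {0::'a})}"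
  proof -
    have "finite (UNIV - {0::'a})" by simp
    then show ?thesis using ex_bij_betw_finite_nat[of "UNIV - {0::'a}"] that by blast
  qed
  have c: "card (UNIV - {0::'a}) = CARD('a) - 1" by (simp add: card_Diff_singleton)
  have hi: "inj_on h (UNIV - {0})" and hr: "h ` (UNIV - {0}) = {0..<CARD('a) - 1}"
    using h c unfolding bij_betw_def by auto
  define io where "io x = (if x = 0 then 0 else Suc (h x))" for x
  have "inj io"
  proof (rule injI)
    fix x y assume "io x = io y"
    then show "x = y" unfolding io_def using hi
      by (cases "x = 0"; cases "y = 0") (auto simp: inj_on_def)
  qed
  moreover have "range io = {0..<CARD('a)}"
  proof
    show "range io \<subseteq> {0..<CARD('a)}"
    proof
      fix n assume "n \<in> range io"
      then obtain x where x: "n = io x" by blast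
      show "n \<in> {0..<CARD('a)}"
      proof (cases "x = 0")
        case True then show ?thesis using x CARD_field_ge2[where 'a='a] unfolding io_def by simp
      next
        case False
        then have "h x \<in> {0..<CARD('a) - 1}" using hr by blast
        then show ?thesis using x False unfolding io_def by simp
      qed
    qed
    show "{0..<CARD('a)} \<subseteq> range io"
    proof
      fix n assume n: "n \<in> {0..<CARD('a)}"
      show "n \<in> range io"
      proof (cases n)
        case 0 then have "io 0 = n" by (simp add: io_def)
        then show ?thesis by (metis rangeI)
      next
        case (Suc m)
        then have "m \<in> {0..<CARD('a) - 1}" using n by simp
        then obtain x where "x \<in> UNIV - {0}" "h x = m" using hr by (metis DiffE imageE)
        then have "io x = n" unfolding io_def using Suc by simp
        then show ?thesis by (metis rangeI)
      qed
    qed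
  qed
  moreover have "io 0 = 0" by (simp add: io_def)
  ultimately show ?thesis unfolding bij_betw_def by blast
qed

lemma sum_remove_cond:
  fixes f :: "'a::{finite,field} \<Rightarrow> nat"
  assumes "r \<noteq> 0"
  shows "(\<Sum>a\<in>UNIV. if r * a + p \<noteq> 0 then f a else 0) + f (- p / r) = (\<Sum>a\<in>UNIV. f a)"
proof -
  have z: "r * a + p = 0 \<longleftrightarrow> a = - p / r" for a
  proof
    assume "r * a + p = 0"
    then have "r * a = - p" by (simp add: eq_neg_iff_add_eq_0)
    have "a = (r * a) / r" using assms by simp
    then have "a = (- p) / r" using \<open>r * a = - p\<close> by simp
    then show "a = - p / r" by simp
  next
    assume "a = - p / r" then show "r * a + p = 0" using assms by simp
  qed
  have "(\<Sum>a\<in>UNIV. f a) = f (- p / r) + (\<Sum>a\<in>UNIV - {- p / r}. f a)"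
    by (simp add: sum.remove)
  moreover have "(\<Sum>a\<in>UNIV. if r * a + p \<noteq> 0 then f a else 0) = (\<Sum>a\<in>UNIV - {- p / r}. f a)"
    by (subst sum.remove[of _ "- p / r"]) (use z in \<open>auto intro!: sum.cong\<close>)
  ultimately show ?thesis by simp
qed



lemma two_sum_lt: "2 * (\<Sum>i<n. i) = n * (n - 1::nat)"
proof (induction n)
  case 0 then show ?case by simp
next
  case (Suc n)
  have "2 * (\<Sum>i<Suc n. i) = n * (n - 1) + 2 * n" using Suc by simp
  also have "\<dots> = Suc n * n" by (cases n) (auto simp: algebra_simps)
  finally show ?case by simp
qed

lemma sum_io2:
  assumes "bij_betw (io :: 'a::finite \<Rightarrow> nat) UNIV {0..<CARD('a)}"
  shows "2 * (\<Sum>a\<in>UNIV. io a) = CARD('a) * (CARD('a) - 1)"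
proof -
  have "(\<Sum>a\<in>UNIV. io a) = (\<Sum>i\<in>{0..<CARD('a)}. i)"
    using sum.reindex_bij_betw[OF assms, of "\<lambda>i. i"] by simp
  then show ?thesis using two_sum_lt[of "CARD('a)"] by (simp add: lessThan_atLeast0)
qed

lemma geom_nat: "q \<ge> 1 \<Longrightarrow> (q - 1) * (\<Sum>j<k. q ^ j) + 1 = (q::nat) ^ k"
proof (induction k)
  case 0 then show ?case by simp
next
  case (Suc k)
  have "(q - 1) * (\<Sum>j<Suc k. q ^ j) + 1 = ((q - 1) * (\<Sum>j<k. q ^ j) + 1) + (q - 1) * q ^ k"
    by (simp add: algebra_simps)
  also have "\<dots> = q ^ k + (q - 1) * q ^ k" using Suc by simp
  also have "\<dots> = q ^ Suc k" using Suc.prems by (cases q) (auto simp: algebra_simps)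
  finally show ?case .
qed

lemma mem_sum_mset: "x \<in># (\<Sum>a\<in>S. f a) \<Longrightarrow> \<exists>a\<in>S. x \<in># f a"
  by (induction S rule: infinite_finite_induct) auto

lemma wt_cong_amb:
  assumes "\<forall>v\<in>#M. v \<in> ambient k" "\<And>i. i < k \<Longrightarrow> u i = u' i"
  shows "wt (Suc k) M u = wt k M u'"
proof -
  have "filter_mset (\<lambda>v. dotp (Suc k) u v \<noteq> 0) M = filter_mset (\<lambda>v. dotp k u' v \<noteq> 0) M"
    using assms by (intro filter_mset_cong0) (simp add: dotp_Suc_amb dotp_cong[of k u u'])
  then show ?thesis unfolding wt_def by simp
qed

lemma wt_zero_vec: "wt k M 0 = 0"
  unfolding wt_def by simp

definition colR :: "nat \<Rightarrow> nat \<Rightarrow> 'a::field \<Rightarrow> nat \<Rightarrow> 'a" where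
  "colR k j a = dlt k + scalev a (dlt j)"

lemma dotp_colR: "j < k \<Longrightarrow> dotp (Suc k) u (colR k j a) = u j * a + u k"
  unfolding colR_def by (simp add: dotp_vadd dotp_vscale dotp_dlt2 mult.commute)

lemma colR_k: "j < k \<Longrightarrow> colR k j a k = 1"
  unfolding colR_def dlt_def scalev_def by simp

lemma colR_amb: "j < k \<Longrightarrow> colR k j a \<in> ambient (Suc k)"
  unfolding colR_def dlt_def scalev_def ambient_def by auto

definition Rm :: "('a \<Rightarrow> nat) \<Rightarrow> nat \<Rightarrow> (nat \<Rightarrow> 'a::{finite,field}) multiset" where
  "Rm io k = (\<Sum>j<k. \<Sum>a\<in>UNIV. replicate_mset (CARD('a) ^ j * io a) (colR k j a))
     + replicate_mset (CARD('a) ^ k) (dlt k)"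

definition Fj :: "('a::{finite,field} \<Rightarrow> nat) \<Rightarrow> nat \<Rightarrow> nat \<Rightarrow> (nat \<Rightarrow> 'a) \<Rightarrow> nat" where
  "Fj io k j u = (\<Sum>a\<in>UNIV. if u j * a + u k \<noteq> 0 then io a else 0)"

definition dd :: "('a::{finite,field} \<Rightarrow> nat) \<Rightarrow> nat \<Rightarrow> (nat \<Rightarrow> 'a) \<Rightarrow> nat \<Rightarrow> nat" where
  "dd io k u j = (if u j \<noteq> 0 then io (- u k / u j) else 0)"

context fixes io :: "'a::{finite,field} \<Rightarrow> nat"
begin

lemma wt_Rm: "wt (Suc k) (Rm io k) u
   = (\<Sum>j<k. CARD('a) ^ j * Fj io k j u) + (if u k \<noteq> 0 then CARD('a::{finite,field}) ^ k else 0)"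
proof -
  have "wt (Suc k) (\<Sum>j<k. \<Sum>a\<in>UNIV. replicate_mset (CARD('a) ^ j * io a) (colR k j a)) u
      = (\<Sum>j<k. \<Sum>a\<in>UNIV. if u j * a + u k \<noteq> 0 then CARD('a) ^ j * io a else 0)"
    by (simp add: wt_sum wt_rep dotp_colR)
  also have "\<dots> = (\<Sum>j<k. CARD('a) ^ j * Fj io k j u)"
    unfolding Fj_def sum_distrib_left by (intro sum.cong refl) auto
  finally show ?thesis unfolding Rm_def by (simp add: wt_plus wt_rep dotp_dlt2)
qed

lemma size_Rm: "size (Rm io k) = (\<Sum>j<k. CARD('a) ^ j * (\<Sum>a\<in>UNIV. io a)) + CARD('a::{finite,field}) ^ k"
  unfolding Rm_def by (simp add: size_sum_mset sum_distrib_left)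

lemma Fj_le: "Fj io k j u \<le> (\<Sum>a\<in>UNIV. io a)"
  unfolding Fj_def by (intro sum_mono) auto

lemma Fj_nz: "u j \<noteq> 0 \<Longrightarrow> Fj io k j u + io (- u k / u j) = (\<Sum>a\<in>UNIV. io a)"
  unfolding Fj_def by (rule sum_remove_cond)

lemma Fj_z: "u j = 0 \<Longrightarrow> Fj io k j u = (if u k \<noteq> 0 then (\<Sum>a\<in>UNIV. io a) else 0)"
  unfolding Fj_def by simp

lemma R_nz:
  assumes "u k \<noteq> 0"
  shows "wt (Suc k) (Rm io k) u + (\<Sum>j<k. CARD('a) ^ j * dd io k u j)
     = (\<Sum>j<k. CARD('a) ^ j * (\<Sum>a\<in>UNIV. io a)) + CARD('a::{finite,field}) ^ k"
proof -
  have "Fj io k j u + dd io k u j = (\<Sum>a\<in>UNIV. io a)" for j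
    using Fj_nz[of u j k] Fj_z[of u j k] assms unfolding dd_def by auto
  then have "(\<Sum>j<k. CARD('a) ^ j * Fj io k j u) + (\<Sum>j<k. CARD('a) ^ j * dd io k u j)
      = (\<Sum>j<k. CARD('a) ^ j * (\<Sum>a\<in>UNIV. io a))"
    by (simp add: sum.distrib[symmetric] distrib_left[symmetric])
  then show ?thesis using assms by (simp add: wt_Rm)
qed

lemma R_z:
  assumes "u k = 0"
  shows "wt (Suc k) (Rm io k) u \<le> (\<Sum>j<k. CARD('a) ^ j * (\<Sum>a\<in>UNIV. io (a::'a::{finite,field})))"
  using assms by (simp add: wt_Rm Fj_le sum_mono)

lemma R_le:
  shows "wt (Suc k) (Rm io k) u \<le> (\<Sum>j<k. CARD('a) ^ j * (\<Sum>a\<in>UNIV. io (a::'a::{finite,field}))) + CARD('a) ^ k"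
  by (simp add: wt_Rm Fj_le sum_mono add_mono)

end


lemma Mu_bound:
  fixes q T G Q :: nat
  assumes q2: "q \<ge> 2" and h1: "(q - 1) * G + 1 = Q" and h2: "2 * T = q * (q - 1)"
  shows "T * G + Q + 1 \<le> q * Q"
proof -
  have Q1: "Q \<ge> 1" using h1 by simp
  have "2 * (T * G) = q * ((q - 1) * G)" using h2 by (metis mult.assoc)
  also have "\<dots> = q * (Q - 1)" using h1 by (metis add_diff_cancel_right')
  finally have e: "2 * (T * G) = q * (Q - 1)" .
  have e2: "q * (Q - 1) + q = q * Q" using Q1 by (simp add: algebra_simps)
  have e3: "2 * Q \<le> q * Q" using q2 by simp
  show ?thesis using e e2 e3 q2 by linarith
qed

lemma step_lemma:
  fixes M :: "(nat \<Rightarrow> 'a::{finite,field}) multiset" and io :: "'a \<Rightarrow> nat"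
  assumes g: "good k M" and io: "bij_betw io UNIV {0..<CARD('a)}" and io0: "io 0 = 0"
  shows "\<exists>M' :: (nat \<Rightarrow> 'a) multiset. good (Suc k) M' \<and> size M' + 1 \<le> CARD('a) ^ Suc k * (size M + 1)"
proof -
  define q where "q = CARD('a)"
  define T where "T = (\<Sum>a\<in>UNIV. io a)"
  define C where "C = (\<Sum>j<k. q ^ j * T)"
  define Mu where "Mu = C + q ^ k + 1"
  define R where "R = Rm io k"
  define M' where "M' = repeat_mset Mu M + R"
  have q2: "q \<ge> 2" using CARD_field_ge2[where 'a='a] q_def by simp
  have Rle: "wt (Suc k) R u < Mu" for u
    using R_le[where io=io and k=k and u=u] unfolding R_def C_def T_def Mu_def q_def by simp
  have gM: "\<forall>v\<in>#M. v \<in> ambient k" using g unfolding good_def by auto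
  have wM': "wt (Suc k) M' u = Mu * wt k M (u(k:=0)) + wt (Suc k) R u" for u
    unfolding M'_def wt_plus wt_repeat using wt_cong_amb[OF gM, of u "u(k:=0)"] by simp
  have amb': "u(k:=0) \<in> ambient k" if "u \<in> ambient (Suc k)" for u :: "nat \<Rightarrow> 'a"
    using that unfolding ambient_def by auto
  have iolt: "io a < q" for a using io unfolding bij_betw_def q_def by auto
  have ddlt: "dd io k u j < q" for u j unfolding dd_def using iolt q2 by auto
  have Xlt: "(\<Sum>j<k. q ^ j * dd io k u j) < q ^ k" for u by (rule digits_lt) (rule ddlt)
  have Rnz: "wt (Suc k) R u + (\<Sum>j<k. q ^ j * dd io k u j) = C + q ^ k" if "u k \<noteq> 0" for u
    using R_nz[where io=io and k=k and u=u, OF that] unfolding R_def C_def T_def q_def by simp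
  have Rz: "wt (Suc k) R u \<le> C" if "u k = 0" for u
    using R_z[where io=io and k=k and u=u, OF that] unfolding R_def C_def T_def q_def by simp
  have R3: "x k = y k" if x: "x \<in> ambient (Suc k)" and y: "y \<in> ambient (Suc k)"
     and xy: "x(k:=0) = y(k:=0)" and xnz: "x(k:=0) \<noteq> 0" and rw: "wt (Suc k) R x = wt (Suc k) R y"
     for x y :: "nat \<Rightarrow> 'a"
  proof -
    have same: "x j = y j" if "j < k" for j
    proof -
      have "(x(k:=0)) j = (y(k:=0)) j" using xy by simp
      then show ?thesis using that by simp
    qed
    obtain i where i: "(x(k:=0)) i \<noteq> 0" using xnz by (auto simp: fun_eq_iff)
    then have ik: "i \<noteq> k" by auto
    have xi: "x i \<noteq> 0" using i ik by simp
    have "\<not> Suc k \<le> i" using x xi unfolding ambient_def by blast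
    then have j0: "i < k" "x i \<noteq> 0" using ik xi by auto
    show ?thesis
    proof (cases "x k = 0"; cases "y k = 0")
      assume "x k = 0" "y k = 0" then show ?thesis by simp
    next
      assume a: "x k \<noteq> 0" "y k \<noteq> 0"
      have "(\<Sum>j<k. q ^ j * dd io k x j) = (\<Sum>j<k. q ^ j * dd io k y j)"
        using Rnz[of x, OF a(1)] Rnz[of y, OF a(2)] rw by simp
      then have "\<forall>j<k. dd io k x j = dd io k y j" by (intro digits_unique) (auto intro: ddlt)
      then have "dd io k x i = dd io k y i" using j0 by simp
      then have "io (- x k / x i) = io (- y k / x i)" unfolding dd_def using j0 same by simp
      then have "- x k / x i = - y k / x i" using io unfolding bij_betw_def inj_def by blast
      then show ?thesis using j0 by (simp add: divide_cancel_right)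
    next
      assume a: "x k \<noteq> 0" "y k = 0"
      have "wt (Suc k) R x > C" using Rnz[of x, OF a(1)] Xlt[of x] by simp
      then show ?thesis using Rz[of y, OF a(2)] rw by simp
    next
      assume a: "x k = 0" "y k \<noteq> 0"
      have "wt (Suc k) R y > C" using Rnz[of y, OF a(2)] Xlt[of y] by simp
      then show ?thesis using Rz[of x, OF a(1)] rw by simp
    qed
  qed
  have memb: "v \<in> ambient (Suc k) \<and> v \<noteq> 0" if "v \<in># M'" for v
  proof -
    have "v \<in># repeat_mset Mu M \<or> v \<in># R" using that unfolding M'_def by (simp only: union_iff)
    then show ?thesis
    proof
      assume "v \<in># repeat_mset Mu M"
      then have "count (repeat_mset Mu M) v > 0" by (simp only: count_greater_zero_iff)
      then have "Mu * count M v > 0" by (simp only: count_repeat_mset)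
      then have "count M v > 0" by simp
      then have "v \<in># M" by (simp only: count_greater_zero_iff)
      then have "v \<in> ambient k" "v \<noteq> 0" using g unfolding good_def by auto
      then show ?thesis unfolding ambient_def by auto
    next
      assume "v \<in># R"
      then have "v \<in># (\<Sum>j<k. \<Sum>a\<in>UNIV. replicate_mset (CARD('a) ^ j * io a) (colR k j a))
                 \<or> v \<in># replicate_mset (CARD('a) ^ k) (dlt k)"
        unfolding R_def Rm_def by (simp only: union_iff)
      then show ?thesis
      proof
        assume "v \<in># (\<Sum>j<k. \<Sum>a\<in>UNIV. replicate_mset (CARD('a) ^ j * io a) (colR k j a))"
        then obtain j where j: "j < k" "v \<in># (\<Sum>a\<in>UNIV. replicate_mset (CARD('a) ^ j * io a) (colR k j a))"
          using mem_sum_mset[of v "\<lambda>j. \<Sum>a\<in>UNIV. replicate_mset (CARD('a) ^ j * io a) (colR k j a)"] by blast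
        then obtain a where "v \<in># replicate_mset (CARD('a) ^ j * io a) (colR k j a)"
          using mem_sum_mset[of v "\<lambda>a. replicate_mset (CARD('a) ^ j * io a) (colR k j a)"] by blast
        then have "v = colR k j a" by (meson in_replicate_mset)
        moreover have "colR k j a k \<noteq> 0" using colR_k[OF j(1), of a] by simp
        ultimately show ?thesis using colR_amb[OF j(1), of a] by fastforce
      next
        assume "v \<in># replicate_mset (CARD('a) ^ k) (dlt k)"
        then have "v = dlt k" by (meson in_replicate_mset)
        moreover have "dlt k k \<noteq> (0::'a)" by (simp add: dlt_def)
        ultimately show ?thesis using dlt_ambient[of k "Suc k"] by fastforce
      qed
    qed
  qed
  have Rpos: "wt (Suc k) R u > C" if "u k \<noteq> 0" for u
    using Rnz[of u, OF that] Xlt[of u] by simp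
  have uz: "u = 0" if "u(k:=0) = 0" "u k = 0" for u :: "nat \<Rightarrow> 'a"
  proof (rule ext)
    fix i
    have "(u(k:=0)) i = 0" using that(1) by simp
    then show "u i = 0 i" using that(2) by (cases "i = k") auto
  qed
  have pos: "wt (Suc k) M' u > 0" if u: "u \<in> ambient (Suc k) - {0}" for u
  proof (cases "u(k:=0) = 0")
    case True
    then have "u k \<noteq> 0" using u uz by blast
    then show ?thesis using Rpos[of u] wM'[of u] by simp
  next
    case False
    then have "wt k M (u(k:=0)) > 0" using g amb'[of u] u unfolding good_def by blast
    then show ?thesis using wM'[of u] Mu_def by simp
  qed
  have divmod: "a = b \<and> r1 = r2" if "Mu * a + r1 = Mu * b + r2" "r1 < Mu" "r2 < Mu" for a b r1 r2 :: nat
  proof -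
    have "(Mu * a + r1) div Mu = a" "(Mu * b + r2) div Mu = b" using that(2,3) by simp_all
    then have "a = b" using that(1) by metis
    then show ?thesis using that(1) by simp
  qed
  have injw: "\<exists>c. v = scalev c u" if u: "u \<in> ambient (Suc k) - {0}" and v: "v \<in> ambient (Suc k) - {0}"
     and e: "wt (Suc k) M' u = wt (Suc k) M' v" for u v
  proof -
    have ab: "wt k M (u(k:=0)) = wt k M (v(k:=0)) \<and> wt (Suc k) R u = wt (Suc k) R v"
    proof -
      have "Mu * wt k M (u(k:=0)) + wt (Suc k) R u = Mu * wt k M (v(k:=0)) + wt (Suc k) R v"
        using e wM'[of u] wM'[of v] by simp
      from divmod[OF this Rle[of u] Rle[of v]] show ?thesis .
    qed
    show ?thesis
    proof (cases "u(k:=0) = 0")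
      case True
      then have "wt k M (v(k:=0)) = 0" using ab wt_zero_vec[of k M] by simp
      have v0: "v(k:=0) = 0"
      proof (rule ccontr)
        assume "v(k:=0) \<noteq> 0"
        then have "wt k M (v(k:=0)) > 0" using g amb'[of v] v unfolding good_def by blast
        then show False using \<open>wt k M (v(k:=0)) = 0\<close> by simp
      qed
      have uk: "u k \<noteq> 0" using True u uz by blast
      have vk: "v k \<noteq> 0" using v0 v uz by blast
      have "v = scalev (v k / u k) u"
      proof (rule ext)
        fix i show "v i = scalev (v k / u k) u i"
        proof (cases "i = k")
          case True then show ?thesis using uk by (simp add: scalev_def)
        next
          case False
          then have "u i = 0" "v i = 0" using fun_cong[OF True, of i] fun_cong[OF v0, of i] by auto
          then show ?thesis by (simp add: scalev_def)
        qed
      qed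
      then show ?thesis by blast
    next
      case False
      have "v(k:=0) \<noteq> 0"
      proof
        assume "v(k:=0) = 0"
        then have "wt k M (v(k:=0)) = 0" using wt_zero_vec[of k M] by simp
        moreover have "wt k M (u(k:=0)) > 0" using g amb'[of u] u False unfolding good_def by blast
        ultimately show False using ab by simp
      qed
      then obtain c where c: "v(k:=0) = scalev c (u(k:=0))"
        using g amb'[of u] amb'[of v] u v False ab unfolding good_def by blast
      have c0: "c \<noteq> 0" using c \<open>v(k:=0) \<noteq> 0\<close> by (auto simp: scalev_def fun_eq_iff)
      define v2 where "v2 = scalev (inverse c) v"
      have v2a: "v2 \<in> ambient (Suc k)" using v ambient_scale unfolding v2_def by blast
      have v2u: "v2(k:=0) = u(k:=0)"
      proof (rule ext)
        fix i show "(v2(k:=0)) i = (u(k:=0)) i"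
        proof (cases "i = k")
          case False
          have "v i = c * u i" using fun_cong[OF c, of i] False by (simp add: scalev_def)
          then show ?thesis using False c0 unfolding v2_def scalev_def by simp
        qed simp
      qed
      have "wt (Suc k) R v2 = wt (Suc k) R u"
        unfolding v2_def using wt_scale[of "inverse c"] c0 ab by simp
      then have "u k = v2 k" using R3[of u v2] u v2a v2u False by simp
      have "v2 = u"
      proof (rule ext)
        fix i show "v2 i = u i"
          using \<open>u k = v2 k\<close> fun_cong[OF v2u, of i] by (cases "i = k") auto
      qed
      have "scalev c v2 = v" unfolding v2_def scalev_def using c0 by (simp add: fun_eq_iff mult.assoc[symmetric])
      then have "v = scalev c u" using \<open>v2 = u\<close> by simp
      then show ?thesis by blast
    qed
  qed
  have good': "good (Suc k) M'"
    unfolding good_def using memb pos injw by blast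
  have sizeR: "size R = C + q ^ k" unfolding R_def C_def T_def q_def by (simp add: size_Rm)
  have "size M' + 1 = Mu * (size M + 1)" unfolding M'_def using sizeR by (simp add: Mu_def algebra_simps)
  moreover have "Mu \<le> q ^ Suc k"
  proof -
    have "Mu = T * (\<Sum>j<k. q ^ j) + q ^ k + 1" unfolding Mu_def C_def by (simp add: sum_distrib_left mult.commute)
    also have "\<dots> \<le> q * q ^ k"
      by (rule Mu_bound[OF q2]) (use geom_nat[of q k] q2 sum_io2[OF io] in \<open>auto simp: T_def q_def\<close>)
    finally show ?thesis by simp
  qed
  ultimately have "size M' + 1 \<le> q ^ Suc k * (size M + 1)"
    by (metis mult_le_mono1)
  then show ?thesis using good' unfolding q_def by (intro exI[of _ M'] conjI)
qed



definition vec3 :: "'a::zero \<Rightarrow> 'a \<Rightarrow> 'a \<Rightarrow> nat \<Rightarrow> 'a" where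
  "vec3 x y z = (\<lambda>i. if i = 0 then x else if i = 1 then y else if i = 2 then z else 0)"

lemma dotp3: "dotp 3 u v = u 0 * v 0 + u 1 * v 1 + u 2 * v 2"
  unfolding dotp_def by (simp add: eval_nat_numeral lessThan_Suc algebra_simps)

lemma vec3_app[simp]: "vec3 x y z 0 = x" "vec3 x y z 1 = y" "vec3 x y z 2 = z"
   "vec3 x y z (Suc 0) = y" "vec3 x y z (Suc (Suc 0)) = z"
  unfolding vec3_def by auto

lemma vec3_amb: "vec3 x y z \<in> ambient 3"
  unfolding vec3_def ambient_def by auto

lemma vec3_eq: "vec3 x y z = vec3 x' y' z' \<longleftrightarrow> x = x' \<and> y = y' \<and> z = z'"
  by (metis vec3_app)

lemma sumK: "(\<Sum>c\<in>UNIV. if c + p \<noteq> 0 then K else 0) + K = CARD('a::{finite,field}) * (K::nat)"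
  for p :: "'a::{finite,field}"
  using sum_remove_cond[of 1 p "\<lambda>_. K"] by simp

lemma sumF: "(\<Sum>a\<in>UNIV. if a + p \<noteq> 0 then f a else 0) + f (- p) = (\<Sum>a\<in>UNIV. (f a::nat))"
  for p :: "'a::{finite,field}"
  using sum_remove_cond[of 1 p f] by simp


context fixes io :: "'a::{finite,field} \<Rightarrow> nat"
begin

definition "nu = (\<Sum>a\<in>UNIV. io a) * (CARD('a) + 1) + 1"

definition "B1 = (\<Sum>a\<in>UNIV. \<Sum>c\<in>UNIV. replicate_mset (CARD('a) * io a) (vec3 1 a c))"
definition "B2 = (\<Sum>a\<in>UNIV. replicate_mset (io a) (vec3 1 0 a))"
definition "B3 = (\<Sum>a\<in>UNIV. replicate_mset (CARD('a) * io a + nu) (vec3 0 1 a))"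
definition "Base = B1 + B2 + B3"

lemma wA: "wt 3 Base (vec3 x y 1) + io (- x) + CARD('a) * io (- y) + nu
   = (CARD('a) - 1) * CARD('a) * (\<Sum>a\<in>UNIV. io a) + (\<Sum>a\<in>UNIV. io a) + CARD('a) * (\<Sum>a\<in>UNIV. io a)
     + CARD('a) * nu"
proof -
  let ?q = "CARD('a)" and ?T = "\<Sum>a\<in>UNIV. io a"
  have "wt 3 B1 (vec3 x y 1) = (\<Sum>a\<in>UNIV. \<Sum>c\<in>UNIV. if c + (x + y * a) \<noteq> 0 then ?q * io a else 0)"
    unfolding B1_def by (simp add: wt_sum wt_rep dotp3 algebra_simps)
  also have "\<dots> = (\<Sum>a\<in>UNIV. (?q - 1) * (?q * io a))"
  proof (rule sum.cong[OF refl])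
    fix a
    have "(\<Sum>c\<in>UNIV. if c + (x + y * a) \<noteq> 0 then ?q * io a else 0) + ?q * io a = ?q * (?q * io a)"
      by (rule sumK)
    then show "(\<Sum>c\<in>UNIV. if c + (x + y * a) \<noteq> 0 then ?q * io a else 0) = (?q - 1) * (?q * io a)"
      by (simp add: diff_mult_distrib)
  qed
  also have "\<dots> = (?q - 1) * ?q * ?T" by (simp add: sum_distrib_left mult.assoc)
  finally have w1: "wt 3 B1 (vec3 x y 1) = (?q - 1) * ?q * ?T" .
  have "wt 3 B2 (vec3 x y 1) = (\<Sum>a\<in>UNIV. if a + x \<noteq> 0 then io a else 0)"
    unfolding B2_def by (simp add: wt_sum wt_rep dotp3 algebra_simps)
  then have w2: "wt 3 B2 (vec3 x y 1) + io (- x) = ?T" using sumF[of x io] by simp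
  have "wt 3 B3 (vec3 x y 1) = (\<Sum>a\<in>UNIV. if a + y \<noteq> 0 then nu + ?q * io a else 0)"
    unfolding B3_def by (simp add: wt_sum wt_rep dotp3 algebra_simps)
  then have w3: "wt 3 B3 (vec3 x y 1) + (nu + ?q * io (- y)) = ?q * ?T + ?q * nu"
    using sumF[of y "\<lambda>a. nu + ?q * io a"] by (simp add: sum.distrib sum_distrib_left)
  show ?thesis using w1 w2 w3 unfolding Base_def wt_plus by simp
qed

lemma wB: "wt 3 Base (vec3 x 1 0) + CARD('a) * CARD('a) * io (- x)
   = CARD('a) * CARD('a) * (\<Sum>a\<in>UNIV. io a) + (if x \<noteq> 0 then (\<Sum>a\<in>UNIV. io a) else 0)
     + CARD('a) * (\<Sum>a\<in>UNIV. io a) + CARD('a) * nu"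
proof -
  let ?q = "CARD('a)" and ?T = "\<Sum>a\<in>UNIV. io a"
  have "wt 3 B1 (vec3 x 1 0) = (\<Sum>a\<in>UNIV. ?q * (if a + x \<noteq> 0 then ?q * io a else 0))"
    unfolding B1_def by (simp add: wt_sum wt_rep dotp3 algebra_simps)
  also have "\<dots> = ?q * (\<Sum>a\<in>UNIV. if a + x \<noteq> 0 then ?q * io a else 0)"
    by (simp add: sum_distrib_left)
  finally have e1: "wt 3 B1 (vec3 x 1 0) = ?q * (\<Sum>a\<in>UNIV. if a + x \<noteq> 0 then ?q * io a else 0)" .
  have "(\<Sum>a\<in>UNIV. if a + x \<noteq> 0 then ?q * io a else 0) + ?q * io (- x) = ?q * ?T"
    using sumF[of x "\<lambda>a. ?q * io a"] by (simp add: sum_distrib_left)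
  then have "?q * ((\<Sum>a\<in>UNIV. if a + x \<noteq> 0 then ?q * io a else 0) + ?q * io (- x)) = ?q * (?q * ?T)"
    by simp
  then have w1: "wt 3 B1 (vec3 x 1 0) + ?q * (?q * io (- x)) = ?q * ?q * ?T"
    unfolding e1 by (simp only: distrib_left mult.assoc)
  have w2: "wt 3 B2 (vec3 x 1 0) = (if x \<noteq> 0 then ?T else 0)"
    unfolding B2_def by (simp add: wt_sum wt_rep dotp3)
  have w3: "wt 3 B3 (vec3 x 1 0) = ?q * ?T + ?q * nu"
    unfolding B3_def by (simp add: wt_sum wt_rep dotp3 sum.distrib sum_distrib_left)
  show ?thesis using w1 w2 w3 unfolding Base_def wt_plus by (simp add: mult.assoc)
qed

lemma wC: "wt 3 Base (vec3 1 0 0) = CARD('a) * CARD('a) * (\<Sum>a\<in>UNIV. io a) + (\<Sum>a\<in>UNIV. io a)"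
proof -
  let ?q = "CARD('a)" and ?T = "\<Sum>a\<in>UNIV. io a"
  have w1: "wt 3 B1 (vec3 1 0 0) = ?q * ?q * ?T"
    unfolding B1_def by (simp add: wt_sum wt_rep dotp3 sum_distrib_left mult.assoc)
  have w2: "wt 3 B2 (vec3 1 0 0) = ?T"
    unfolding B2_def by (simp add: wt_sum wt_rep dotp3)
  have w3: "wt 3 B3 (vec3 1 0 0) = 0"
    unfolding B3_def by (simp add: wt_sum wt_rep dotp3)
  show ?thesis using w1 w2 w3 unfolding Base_def wt_plus by simp
qed

lemma size_Base: "size Base = CARD('a) * CARD('a) * (\<Sum>a\<in>UNIV. io a) + (\<Sum>a\<in>UNIV. io a)
   + CARD('a) * (\<Sum>a\<in>UNIV. io a) + CARD('a) * nu"
  unfolding Base_def B1_def B2_def B3_def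
  by (simp add: size_sum_mset sum.distrib sum_distrib_left mult.assoc)

end


lemma scalev_vec3: "scalev c (vec3 x y z) = vec3 (c * x) (c * y) (c * (z::'a::field))"
  unfolding scalev_def vec3_def by (auto simp: fun_eq_iff)

lemma amb3_vec3: "u \<in> ambient 3 \<Longrightarrow> u = vec3 (u 0) (u 1) (u 2)"
  unfolding ambient_def vec3_def by (auto simp: fun_eq_iff numeral_3_eq_3)

lemma vec3_zero: "vec3 0 0 0 = (0::nat \<Rightarrow> 'a::zero)"
  unfolding vec3_def by (auto simp: fun_eq_iff)

lemma nf3v:
  assumes nz: "vec3 a b d \<noteq> (0 :: nat \<Rightarrow> 'a::field)"
  shows "\<exists>c. c \<noteq> 0 \<and> ((\<exists>x y. scalev c (vec3 a b d) = vec3 x y 1) \<or> (\<exists>x. scalev c (vec3 a b d) = vec3 x 1 0)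
          \<or> scalev c (vec3 a b d) = vec3 1 0 0)"
proof (cases "d = 0")
  case False
  have h: "scalev (inverse d) (vec3 a b d) = vec3 (inverse d * a) (inverse d * b) 1"
    by (simp add: scalev_vec3 False)
  show ?thesis
  proof (rule exI[of _ "inverse d"], rule conjI)
    show "inverse d \<noteq> 0" using False by simp
    show "(\<exists>x y. scalev (inverse d) (vec3 a b d) = vec3 x y 1) \<or> (\<exists>x. scalev (inverse d) (vec3 a b d) = vec3 x 1 0)
          \<or> scalev (inverse d) (vec3 a b d) = vec3 1 0 0"
      by (rule disjI1, rule exI, rule exI, rule h)
  qed
next
  case z2: True
  show ?thesis
  proof (cases "b = 0")
    case False
    have h: "scalev (inverse b) (vec3 a b d) = vec3 (inverse b * a) 1 0"
      by (simp add: scalev_vec3 False z2)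
    show ?thesis
    proof (rule exI[of _ "inverse b"], rule conjI)
      show "inverse b \<noteq> 0" using False by simp
      show "(\<exists>x y. scalev (inverse b) (vec3 a b d) = vec3 x y 1) \<or> (\<exists>x. scalev (inverse b) (vec3 a b d) = vec3 x 1 0)
          \<or> scalev (inverse b) (vec3 a b d) = vec3 1 0 0"
        by (rule disjI2, rule disjI1, rule exI, rule h)
    qed
  next
    case z1: True
    have a0: "a \<noteq> 0"
    proof
      assume "a = 0" then have "vec3 a b d = vec3 0 0 0" using z1 z2 by simp
      then show False using nz vec3_zero by metis
    qed
    have h: "scalev (inverse a) (vec3 a b d) = vec3 1 0 0"
      by (simp add: scalev_vec3 z1 z2 a0)
    show ?thesis
    proof (rule exI[of _ "inverse a"], rule conjI)
      show "inverse a \<noteq> 0" using a0 by simp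
      show "(\<exists>x y. scalev (inverse a) (vec3 a b d) = vec3 x y 1) \<or> (\<exists>x. scalev (inverse a) (vec3 a b d) = vec3 x 1 0)
          \<or> scalev (inverse a) (vec3 a b d) = vec3 1 0 0"
        by (rule disjI2, rule disjI2, rule h)
    qed
  qed
qed

lemma nf3:
  assumes u: "u \<in> ambient 3" "u \<noteq> (0 :: nat \<Rightarrow> 'a::field)"
  shows "\<exists>c. c \<noteq> 0 \<and> ((\<exists>x y. scalev c u = vec3 x y 1) \<or> (\<exists>x. scalev c u = vec3 x 1 0) \<or> scalev c u = vec3 1 0 0)"
proof -
  obtain a b d where ue: "u = vec3 a b d" using amb3_vec3[OF u(1)] by blast
  have "vec3 a b d \<noteq> 0" using u(2) ue by simp
  from nf3v[OF this] show ?thesis unfolding ue .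
qed

lemma poly1: "(p + 2) * (p + 2) \<le> (p + 1) * (p + 4::nat)"
  by (simp add: algebra_simps)

lemma poly2: "(p + 2) * (p + 1) * (2 * (p + 2) * (p + 2) + 2 * (p + 2) + 1) + 2 * (p + 2) + 2 + p * (p + 3)
   = 2 * (p + 2) ^ 4" for p :: nat
  by (simp add: power4_eq_xxxx algebra_simps)


lemma base_lemma:
  fixes io :: "'a::{finite,field} \<Rightarrow> nat"
  assumes io: "bij_betw io UNIV {0..<CARD('a)}" and io0: "io 0 = 0"
  shows "good 3 (Base io) \<and> size (Base io) + 1 \<le> CARD('a) ^ 4"
proof -
  define q where "q = CARD('a)"
  define T where "T = (\<Sum>a\<in>UNIV. io a)"
  define N where "N = nu io"
  define W where "W = wt 3 (Base io)"
  have q2: "q \<ge> 2" using CARD_field_ge2[where 'a='a] q_def by simp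
  define p where "p = q - 2"
  have qp: "q = p + 2" using q2 unfolding p_def by simp
  have T2: "2 * T = q * (q - 1)" using sum_io2[OF io] unfolding q_def T_def .
  have T1: "T \<ge> 1"
  proof -
    have "q * (q - 1) \<ge> 2 * 1" using q2 by (intro mult_le_mono) auto
    then show ?thesis using T2 by simp
  qed
  have Nd: "N = T * (q + 1) + 1" unfolding N_def nu_def T_def q_def by simp
  have iolt: "io a < q" for a using io unfolding bij_betw_def q_def by auto
  have ioinj: "a = b" if "io a = io b" for a b using io that unfolding bij_betw_def inj_def by blast
  have ionz: "io a \<ge> 1" if "a \<noteq> 0" for a
  proof -
    have "io a \<noteq> io 0"
    proof
      assume "io a = io 0" then have "a = 0" by (rule ioinj)
      then show False using that by simp
    qed
    then show ?thesis using io0 by simp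
  qed
  have wA': "W (vec3 x y 1) + io (- x) + q * io (- y) + N = (q - 1) * q * T + T + q * T + q * N" for x y
    using wA[of io x y] unfolding W_def q_def T_def N_def by simp
  have wB': "W (vec3 x 1 0) + q * q * io (- x) = q * q * T + (if x \<noteq> 0 then T else 0) + q * T + q * N" for x
    using wB[of io x] unfolding W_def q_def T_def N_def by simp
  have wC': "W (vec3 1 0 0) = q * q * T + T"
    using wC[of io] unfolding W_def q_def T_def by simp
  have r1: "(q - 1) * q * T + q * T = q * q * T" using q2 by (cases q) (auto simp: algebra_simps)
  have r2: "q * N \<ge> N + q * q"
  proof -
    have "T * (q + 1) \<ge> 1 * (q + 1)" by (rule mult_le_mono1[OF T1])
    then have "N \<ge> p + 4" using Nd qp by simp
    then have "(p + 1) * N \<ge> (p + 1) * (p + 4)" by (rule mult_le_mono2)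
    then have "(p + 1) * N \<ge> q * q" using poly1[of p] qp by simp
    moreover have "q * N = N + (p + 1) * N" using qp by (simp add: algebra_simps)
    ultimately show ?thesis by simp
  qed
  have r3: "N = q * T + T + 1" using Nd by (simp add: algebra_simps)
  have r4: "q * q * io a \<le> 2 * (q * T)" for a
  proof -
    have "io a \<le> q - 1" using iolt[of a] by simp
    then have "q * q * io a \<le> q * q * (q - 1)" by (rule mult_le_mono2)
    also have "\<dots> = q * (q * (q - 1))" by (simp only: mult.assoc)
    also have "\<dots> = q * (2 * T)" using T2 by simp
    finally show ?thesis by (simp only: ac_simps)
  qed
  have r5: "io (- x) + q * io (- y) < q * q" for x y
  proof -
    have "io (- y) + 1 \<le> q" using iolt[of "- y"] by simp
    then have "q * (io (- y) + 1) \<le> q * q" by (rule mult_le_mono2)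
    then show ?thesis using iolt[of "- x"] by (simp add: algebra_simps)
  qed
  have r6: "T < q * q"
  proof -
    have "q * (q - 1) \<le> q * q" by (rule mult_le_mono2) simp
    moreover have "q * q > 0" using q2 by simp
    ultimately have "q * (q - 1) < 2 * (q * q)" by linarith
    then show ?thesis using T2 by linarith
  qed
  have cA: "W (vec3 1 0 0) < W (vec3 x y 1)" for x y
    using wA'[of x y] wC' r1 r2 r5[of x y] by linarith
  have cB: "W (vec3 x y 1) < W (vec3 x' 1 0)" for x y x'
  proof (cases "x' = 0")
    case True
    then have wb: "W (vec3 x' 1 0) = q * q * T + q * T + q * N" using wB'[of x'] io0 by simp
    show ?thesis using wA'[of x y] wb r1 r3 by linarith
  next
    case False
    then have wb: "W (vec3 x' 1 0) + q * q * io (- x') = q * q * T + T + q * T + q * N" using wB'[of x'] by simp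
    show ?thesis using wA'[of x y] wb r1 r3 r4[of "- x'"] by linarith
  qed
  have injA: "x = x' \<and> y = y'" if "W (vec3 x y 1) = W (vec3 x' y' 1)" for x y x' y'
  proof -
    have e: "io (- x) + q * io (- y) = io (- x') + q * io (- y')" using wA'[of x y] wA'[of x' y'] that by simp
    let ?d = "\<lambda>j::nat. if j = 0 then io (- x) else io (- y)" and ?e = "\<lambda>j::nat. if j = 0 then io (- x') else io (- y')"
    have "(\<Sum>j<2. q ^ j * ?d j) = (\<Sum>j<2. q ^ j * ?e j)" using e by (simp add: numeral_2_eq_2)
    then have all: "\<forall>j<(2::nat). ?d j = ?e j" by (intro digits_unique) (auto intro: iolt)
    have "?d 0 = ?e 0" "?d 1 = ?e 1" using spec[OF all, of 0] spec[OF all, of 1] by simp_all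
    then have "io (- x) = io (- x')" "io (- y) = io (- y')" by simp_all
    then have "- x = - x'" "- y = - y'" using ioinj by blast+
    then show ?thesis by simp
  qed
  have injB: "x = x'" if "W (vec3 x 1 0) = W (vec3 x' 1 0)" for x x'
  proof -
    have neq: False if "x1 = 0" "x2 \<noteq> 0" "W (vec3 x1 1 0) = W (vec3 x2 1 0)" for x1 x2
    proof -
      have "q * q * io (- x2) \<ge> q * q" using ionz[of "- x2"] that(2) by simp
      moreover have "W (vec3 x1 1 0) = q * q * T + q * T + q * N" using wB'[of x1] io0 that(1) by simp
      moreover have "W (vec3 x2 1 0) + q * q * io (- x2) = q * q * T + T + q * T + q * N"
        using wB'[of x2] that(2) by simp
      ultimately show False using that(3) r6 by linarith
    qed
    show ?thesis
    proof (cases "x = 0"; cases "x' = 0")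
      assume "x = 0" "x' = 0" then show ?thesis by simp
    next
      assume a: "x \<noteq> 0" "x' \<noteq> 0"
      have e1: "W (vec3 x 1 0) + q * q * io (- x) = q * q * T + T + q * T + q * N" using wB'[of x] a(1) by simp
      have e2: "W (vec3 x' 1 0) + q * q * io (- x') = q * q * T + T + q * T + q * N" using wB'[of x'] a(2) by simp
      have "q * q * io (- x) = q * q * io (- x')" using e1 e2 that by linarith
      then have "io (- x) = io (- x')" using q2 by simp
      then have "- x = - x'" using ioinj by blast
      then show ?thesis by simp
    next
      assume "x = 0" "x' \<noteq> 0" then show ?thesis using neq[of x x'] that by simp
    next
      assume "x \<noteq> 0" "x' = 0" then show ?thesis using neq[of x' x] that by simp
    qed
  qed
  define nf where "nf n \<longleftrightarrow> (\<exists>x y. n = vec3 x y 1) \<or> (\<exists>x. n = vec3 x 1 0) \<or> n = vec3 1 0 (0::'a)" for n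
  have nfpos: "W n > 0" if "nf n" for n
  proof -
    have C0: "W (vec3 1 0 0) > 0" using wC' T1 by simp
    have A0: "W (vec3 x y 1) > 0" for x y using cA[of x y] C0 by simp
    have B0: "W (vec3 x 1 0) > 0" for x using cB[of 0 0 x] A0[of 0 0] by simp
    show ?thesis using that C0 A0 B0 unfolding nf_def by blast
  qed
  have cBC: "W (vec3 1 0 0) < W (vec3 x 1 0)" for x using cA[of 0 0] cB[of 0 0 x] by simp
  have nfinj: "n1 = n2" if n1: "nf n1" and n2: "nf n2" and e: "W n1 = W n2" for n1 n2
  proof -
    consider (A) x y where "n1 = vec3 x y 1" | (B) x where "n1 = vec3 x 1 0" | (C) "n1 = vec3 1 0 0"
      using n1 unfolding nf_def by blast
    then show ?thesis
    proof cases
      case (A x y)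
      consider (A) x' y' where "n2 = vec3 x' y' 1" | (B) x' where "n2 = vec3 x' 1 0" | (C) "n2 = vec3 1 0 0"
        using n2 unfolding nf_def by blast
      then show ?thesis
      proof cases
        case (A x' y') then show ?thesis using injA[of x y x' y'] e \<open>n1 = _\<close> by simp
      next
        case (B x') then show ?thesis using cB[of x y x'] e \<open>n1 = _\<close> by simp
      next
        case C then show ?thesis using cA[of x y] e \<open>n1 = _\<close> by simp
      qed
    next
      case (B x)
      consider (A) x' y' where "n2 = vec3 x' y' 1" | (B) x' where "n2 = vec3 x' 1 0" | (C) "n2 = vec3 1 0 0"
        using n2 unfolding nf_def by blast
      then show ?thesis
      proof cases
        case (A x' y') then show ?thesis using cB[of x' y' x] e \<open>n1 = _\<close> by simp
      next
        case (B x') then show ?thesis using injB[of x x'] e \<open>n1 = _\<close> by simp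
      next
        case C then show ?thesis using cBC[of x] e \<open>n1 = _\<close> by simp
      qed
    next
      case C
      consider (A) x' y' where "n2 = vec3 x' y' 1" | (B) x' where "n2 = vec3 x' 1 0" | (C) "n2 = vec3 1 0 0"
        using n2 unfolding nf_def by blast
      then show ?thesis
      proof cases
        case (A x' y') then show ?thesis using cA[of x' y'] e \<open>n1 = _\<close> by simp
      next
        case (B x') then show ?thesis using cBC[of x'] e \<open>n1 = _\<close> by simp
      next
        case C then show ?thesis using \<open>n1 = _\<close> by simp
      qed
    qed
  qed
  have v3nz: "vec3 a b d \<noteq> (0 :: nat \<Rightarrow> 'a)" if "a \<noteq> 0 \<or> b \<noteq> 0" for a b d
  proof
    assume "vec3 a b d = 0"
    then have "vec3 a b d 0 = 0" "vec3 a b d 1 = 0" by simp_all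
    then show False using that by simp
  qed
  have cols: "v \<in> ambient 3 \<and> v \<noteq> 0" if v: "v \<in># Base io" for v
  proof -
    have "\<exists>a b d. v = vec3 a b d \<and> (a \<noteq> 0 \<or> b \<noteq> 0)"
    proof -
      have "v \<in># B1 io \<or> v \<in># B2 io \<or> v \<in># B3 io" using v unfolding Base_def by (simp only: union_iff disj_assoc)
      then show ?thesis
      proof (elim disjE)
        assume "v \<in># B1 io"
        then obtain a where "v \<in># (\<Sum>c\<in>UNIV. replicate_mset (CARD('a) * io a) (vec3 1 a c))"
          unfolding B1_def using mem_sum_mset[of v "\<lambda>a. \<Sum>c\<in>UNIV. replicate_mset (CARD('a) * io a) (vec3 1 a c)"] by blast
        then obtain c where "v \<in># replicate_mset (CARD('a) * io a) (vec3 1 a c)"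
          using mem_sum_mset[of v "\<lambda>c. replicate_mset (CARD('a) * io a) (vec3 1 a c)"] by blast
        then have "v = vec3 1 a c" by (meson in_replicate_mset)
        then show ?thesis by (intro exI[of _ 1] exI[of _ a] exI[of _ c]) simp
      next
        assume "v \<in># B2 io"
        then obtain a where "v \<in># replicate_mset (io a) (vec3 1 0 a)"
          unfolding B2_def using mem_sum_mset[of v "\<lambda>a. replicate_mset (io a) (vec3 1 0 a)"] by blast
        then have "v = vec3 1 0 a" by (meson in_replicate_mset)
        then show ?thesis by (intro exI[of _ 1] exI[of _ 0] exI[of _ a]) simp
      next
        assume "v \<in># B3 io"
        then obtain a where "v \<in># replicate_mset (CARD('a) * io a + nu io) (vec3 0 1 a)"
          unfolding B3_def using mem_sum_mset[of v "\<lambda>a. replicate_mset (CARD('a) * io a + nu io) (vec3 0 1 a)"] by blast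
        then have "v = vec3 0 1 a" by (meson in_replicate_mset)
        then show ?thesis by (intro exI[of _ 0] exI[of _ 1] exI[of _ a]) simp
      qed
    qed
    then obtain a b d where abd: "v = vec3 a b d" "a \<noteq> 0 \<or> b \<noteq> 0" by (elim exE conjE)
    show ?thesis unfolding abd(1) using v3nz[OF abd(2)] vec3_amb[of a b d] by simp
  qed
  have gd: "good 3 (Base io)"
  proof -
    have pos: "wt 3 (Base io) u > 0" if u: "u \<in> ambient 3 - {0}" for u
    proof -
      obtain c where c: "c \<noteq> 0" "nf (scalev c u)" using nf3[of u] u unfolding nf_def by auto
      have "W u = W (scalev c u)" unfolding W_def using wt_scale[OF c(1)] by simp
      then show ?thesis using nfpos[OF c(2)] unfolding W_def by simp
    qed
    have inj: "\<exists>c. v = scalev c u" if uv: "u \<in> ambient 3 - {0}" "v \<in> ambient 3 - {0}" "wt 3 (Base io) u = wt 3 (Base io) v" for u v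
    proof -
      obtain c where c: "c \<noteq> 0" "nf (scalev c u)" using nf3[of u] uv(1) unfolding nf_def by auto
      obtain d where d: "d \<noteq> 0" "nf (scalev d v)" using nf3[of v] uv(2) unfolding nf_def by auto
      have "W (scalev c u) = W (scalev d v)" unfolding W_def using wt_scale[OF c(1), of 3 "Base io" u] wt_scale[OF d(1), of 3 "Base io" v] uv(3) by simp
      then have "scalev c u = scalev d v" using nfinj c(2) d(2) by blast
      then have "scalev (inverse d) (scalev c u) = scalev (inverse d) (scalev d v)" by simp
      then have "v = scalev (inverse d * c) u" using d(1) by (simp add: scalev_scalev)
      then show ?thesis by blast
    qed
    show ?thesis unfolding good_def using cols pos inj by blast
  qed
  have sz: "size (Base io) = q * q * T + T + q * T + q * N"
    using size_Base[of io] unfolding q_def T_def N_def by simp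
  have "2 * (size (Base io) + 1) = 2 * T * (2 * q * q + 2 * q + 1) + 2 * q + 2"
    unfolding sz Nd by (simp add: algebra_simps)
  also have "\<dots> = (p + 2) * (p + 1) * (2 * (p + 2) * (p + 2) + 2 * (p + 2) + 1) + 2 * (p + 2) + 2"
    using T2 qp by simp
  also have "\<dots> \<le> 2 * (p + 2) ^ 4" using poly2[of p] by linarith
  finally have "size (Base io) + 1 \<le> q ^ 4" using qp by simp
  then show ?thesis using gd unfolding q_def by simp
qed



lemma E_step: "k \<ge> 3 \<Longrightarrow> (Suc k ^ 2 + Suc k - 4) div 2 = (k ^ 2 + k - 4) div 2 + Suc k"
proof -
  assume k: "k \<ge> 3"
  have "k * k \<ge> 3 * 3" using k by (intro mult_le_mono) auto
  then have "Suc k ^ 2 + Suc k - 4 = (k ^ 2 + k - 4) + 2 * Suc k"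
    by (simp add: power2_eq_square algebra_simps)
  then show ?thesis by simp
qed

lemma main_ex:
  assumes "k \<ge> 3"
  shows "\<exists>M :: (nat \<Rightarrow> 'a::{finite,field}) multiset. good k M \<and> size M + 1 \<le> CARD('a) ^ ((k ^ 2 + k - 4) div 2)"
  using assms
proof (induction k rule: dec_induct)
  case base
  obtain io :: "'a \<Rightarrow> nat" where io: "bij_betw io UNIV {0..<CARD('a)}" "io 0 = 0" using ex_io by blast
  have h: "good 3 (Base io) \<and> size (Base io) + 1 \<le> CARD('a) ^ 4" by (rule base_lemma[OF io])
  have e: "((3::nat) ^ 2 + 3 - 4) div 2 = 4" by simp
  show ?case unfolding e using h by blast
next
  case (step k)
  obtain io :: "'a \<Rightarrow> nat" where io: "bij_betw io UNIV {0..<CARD('a)}" "io 0 = 0" using ex_io by blast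
  obtain M :: "(nat \<Rightarrow> 'a) multiset" where M: "good k M" "size M + 1 \<le> CARD('a) ^ ((k ^ 2 + k - 4) div 2)"
    using step.IH by blast
  obtain M' :: "(nat \<Rightarrow> 'a) multiset" where M': "good (Suc k) M'" "size M' + 1 \<le> CARD('a) ^ Suc k * (size M + 1)"
    using step_lemma[OF M(1) io] by blast
  have "size M' + 1 \<le> CARD('a) ^ Suc k * CARD('a) ^ ((k ^ 2 + k - 4) div 2)"
    using M'(2) M(2) by (meson le_trans mult_le_mono2)
  also have "\<dots> = CARD('a) ^ ((Suc k ^ 2 + Suc k - 4) div 2)"
    using E_step[OF step.hyps(1)] by (simp add: power_add)
  finally show ?case using M'(1) by blast
qed

theorem mainTheorem16:
  fixes k :: nat
  assumes "k \<ge> 3"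
  shows "\<exists>(n::nat) (C :: (nat \<Rightarrow> 'a::{finite,field}) set).
           is_code n k C \<and> is_MWS n k C \<and> n < CARD('a) ^ ((k^2 + k - 4) div 2)"
proof -
  obtain M :: "(nat \<Rightarrow> 'a) multiset" where M: "good k M" "size M + 1 \<le> CARD('a) ^ ((k ^ 2 + k - 4) div 2)"
    using main_ex[OF assms] by blast
  have "is_code (size M) k (enc k M ` ambient k) \<and> is_MWS (size M) k (enc k M ` ambient k)"
    by (rule good_code[OF M(1)])
  moreover have "size M < CARD('a) ^ ((k^2 + k - 4) div 2)" using M(2) by simp
  ultimately show ?thesis by blast
qed


end
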